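(* Assume the Continuum Hypothesis. Then there is no Bernstein set $B\subseteq\mathbb R$ which is an $\omega_1$-covering.
   Context: A set $B\subseteq\mathbb R$ is a Bernstein set if for every uncountable Borel set $Z\subseteq\mathbb R$ both $Z\cap B$ and $Z\setminus B$ are nonempty. A set $A\subseteq\mathbb R$ is an $\omega_1$-covering if for every $C\subseteq\mathbb R$ with $|C|=\omega_1$ there is $x\in\mathbb R$ with $C+x\subseteq A$. *)

theory Defs
  imports "HOL-Analysis.Analysis"
begin

text \<open>omega_1 is the successor cardinal of aleph_0 (natLeq).\<close>

definition CH :: bool where
  "CH \<longleftrightarrow> ordIso2 (card_of (UNIV :: real set)) (cardSuc natLeq)"

definition bernstein_set :: "real set \<Rightarrow> bool" where
  "bernstein_set B \<longleftrightarrow>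
     (\<forall>Z. Z \<in> sets borel \<and> uncountable Z \<longrightarrow> Z \<inter> B \<noteq> {} \<and> Z - B \<noteq> {})"

definition omega1_covering :: "real set \<Rightarrow> bool" where
  "omega1_covering A \<longleftrightarrow>
     (\<forall>C :: real set. ordIso2 (card_of C) (cardSuc natLeq) \<longrightarrow>
        (\<exists>x::real. (\<lambda>c. c + x) ` C \<subseteq> A))"

end

theory Submission
  imports Defs
begin

theorem mainTheorem7:
  assumes "CH"
  shows "\<not> (\<exists>B :: real set. bernstein_set B \<and> omega1_covering B)"
proof
  assume "\<exists>B :: real set. bernstein_set B \<and> omega1_covering B"
  then obtain B :: "real set" where b: "bernstein_set B" and c: "omega1_covering B" by blast
  from c assms obtain x :: real where x: "(\<lambda>c. c + x) ` UNIV \<subseteq> B"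
    unfolding omega1_covering_def CH_def by blast
  have "B = UNIV"
  proof (intro set_eqI iffI)
    fix y :: real
    have "(y - x) + x \<in> B" using x by blast
    then show "y \<in> B" by simp
  qed simp
  moreover have "uncountable (UNIV :: real set)"
    using uncountable_UNIV_real .
  ultimately show False using b unfolding bernstein_set_def
    by (metis Diff_cancel sets.top space_borel)
qed

end
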